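(* Assume no two of $\bm u_1,\dots,\bm u_m$ are parallel (i.e. the linear arrangement $\{\langle\bm u_i,\bm x\rangle=0\}$ has no repeated hyperplane). Then for $\bm a,\bm b\in\mathbb{R}^m$, the parallel translations $\mathcal{A}_{\bm a}$ and $\mathcal{A}_{\bm b}$ are normally equivalent if and only if $\operatorname{sign}(\mathcal{A}_{\bm a})=\operatorname{sign}(\mathcal{A}_{\bm b})$.
   Context: Fix nonzero $\bm u_1,\dots,\bm u_m\in\mathbb{R}^n$. For $\bm a\in\mathbb{R}^m$, $\mathcal{A}_{\bm a}$ is the indexed arrangement of hyperplanes $\langle\bm u_i,\bm x\rangle=a_i$, $i=1,\dots,m$. The sign vector of $\bm x$ is $(\operatorname{sign}(\langle\bm u_i,\bm x\rangle-a_i))_{i}$, and $\operatorname{sign}(\mathcal{A}_{\bm a})$ is the set of all such sign vectors. Faces: closures of the nonempty sets of points with a common sign vector; $\mathcal{F}(\mathcal{A})$ ordered by inclusion. For a nonempty convex polyhedron $P$: $h_P(\bm u)=\sup_{\bm x\in P}\langle\bm u,\bm x\rangle$, $N_P(\bm x)=\{\bm u:\langle\bm u,\bm x\rangle=h_P(\bm u)\}$, $N_P(G)=N_P(\bm x)$ for $\bm x\in\operatorname{relint}(G)$, $\mathcal{N}(P)$ the set of all $N_P(G)$; $P,Q$ normally equivalent iff $\mathcal{N}(P)=\mathcal{N}(Q)$. Arrangements $\mathcal{A},\mathcal{A}'$ in $\mathbb{R}^n$ are normally equivalent if there is an order-preserving bijection $\Psi:\mathcal{F}(\mathcal{A})\to\mathcal{F}(\mathcal{A}')$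 with $F,\Psi(F)$ normally equivalent for all faces $F$. *)

theory Defs
  imports "HOL-Analysis.Analysis" "HOL-Library.Extended_Real"
begin

(* Arrangement A_a of hyperplanes <u i, x> = a i, i < m, in the euclidean space 'a.
   Sign vectors are functions nat => real, set to 0 outside the index range {..<m}. *)

definition sign_vec :: "nat \<Rightarrow> (nat \<Rightarrow> 'a::euclidean_space) \<Rightarrow> (nat \<Rightarrow> real) \<Rightarrow> 'a \<Rightarrow> (nat \<Rightarrow> real)" where
  "sign_vec m u a x = (\<lambda>i. if i < m then sgn (inner (u i) x - a i) else 0)"

definition arr_signs :: "nat \<Rightarrow> (nat \<Rightarrow> 'a::euclidean_space) \<Rightarrow> (nat \<Rightarrow> real) \<Rightarrow> (nat \<Rightarrow> real) set" where
  "arr_signs m u a = sign_vec m u a ` UNIV"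

definition arr_faces :: "nat \<Rightarrow> (nat \<Rightarrow> 'a::euclidean_space) \<Rightarrow> (nat \<Rightarrow> real) \<Rightarrow> 'a set set" where
  "arr_faces m u a = {closure {x. sign_vec m u a x = s} | s. s \<in> arr_signs m u a}"

definition support_fun :: "'a::euclidean_space set \<Rightarrow> 'a \<Rightarrow> ereal" where
  "support_fun P v = (SUP x\<in>P. ereal (inner v x))"

definition normal_cone_at :: "'a::euclidean_space set \<Rightarrow> 'a \<Rightarrow> 'a set" where
  "normal_cone_at P x = {v. ereal (inner v x) = support_fun P v}"

(* normal fan: the set of all N_P(G) = N_P(x), x in the relative interior of a face G *)
definition normal_fan :: "'a::euclidean_space set \<Rightarrow> 'a set set" where
  "normal_fan P = {normal_cone_at P x | G x. G face_of P \<and> x \<in> rel_interior G}"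

definition normally_equiv :: "'a::euclidean_space set \<Rightarrow> 'a set \<Rightarrow> bool" where
  "normally_equiv P Q \<longleftrightarrow> normal_fan P = normal_fan Q"

definition arr_normally_equiv ::
  "'a::euclidean_space set set \<Rightarrow> 'a set set \<Rightarrow> bool" where
  "arr_normally_equiv F F' \<longleftrightarrow>
     (\<exists>\<Psi>. bij_betw \<Psi> F F'
        \<and> (\<forall>G\<in>F. \<forall>H\<in>F. G \<subseteq> H \<longleftrightarrow> \<Psi> G \<subseteq> \<Psi> H)
        \<and> (\<forall>G\<in>F. normally_equiv G (\<Psi> G)))"

end

theory Submission
  imports Defs
begin


definition sle :: "(nat \<Rightarrow> real) \<Rightarrow> (nat \<Rightarrow> real) \<Rightarrow> bool" where
  "sle t s \<longleftrightarrow> (\<forall>k. t k = 0 \<or> t k = s k)"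

definition cell :: "nat \<Rightarrow> (nat \<Rightarrow> 'a::euclidean_space) \<Rightarrow> (nat \<Rightarrow> real) \<Rightarrow> (nat \<Rightarrow> real) \<Rightarrow> 'a set" where
  "cell m u a s = {x. sign_vec m u a x = s}"

definition polK :: "nat \<Rightarrow> (nat \<Rightarrow> 'a::euclidean_space) \<Rightarrow> (nat \<Rightarrow> real) \<Rightarrow> (nat \<Rightarrow> real) \<Rightarrow> 'a set" where
  "polK m u s t = {v. \<forall>d. (\<forall>k<m. t k = 0 \<longrightarrow> (s k = 0 \<longrightarrow> inner (u k) d = 0) \<and> 0 \<le> s k * inner (u k) d) \<longrightarrow> inner v d \<le> 0}"

lemma sle_refl[simp]: "sle s s" by (simp add: sle_def)
lemma sle_trans: "sle t s \<Longrightarrow> sle s r \<Longrightarrow> sle t r" unfolding sle_def by metis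
lemma sle_antisym: "sle t s \<Longrightarrow> sle s t \<Longrightarrow> t = s" unfolding sle_def by (metis ext)

lemma sgn_eq_pm: "(r::real) = 1 \<or> r = -1 \<Longrightarrow> sgn x = r \<longleftrightarrow> r * x > 0"
  by (auto simp: sgn_if mult_less_0_iff zero_less_mult_iff)

lemma sv_vals: "sign_vec m u a x k = 0 \<or> sign_vec m u a x k = 1 \<or> sign_vec m u a x k = -1"
  by (auto simp: sign_vec_def sgn_if)

lemma sv_ge: "k \<ge> m \<Longrightarrow> sign_vec m u a x k = 0"
  by (simp add: sign_vec_def)

lemma sv_lt: "k < m \<Longrightarrow> sign_vec m u a x k = sgn (inner (u k) x - a k)"
  by (simp add: sign_vec_def)

lemma signs_vals: "s \<in> arr_signs m u a \<Longrightarrow> s k = 0 \<or> s k = 1 \<or> s k = -1"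
  by (auto simp: arr_signs_def sign_vec_def sgn_if split: if_splits)

lemma signs_ge: "s \<in> arr_signs m u a \<Longrightarrow> k \<ge> m \<Longrightarrow> s k = 0"
  using sv_ge by (auto simp: arr_signs_def)

lemma weak_char:
  assumes s: "s \<in> arr_signs m u a"
  shows "sle (sign_vec m u a x) s \<longleftrightarrow>
    (\<forall>k<m. (s k = 0 \<longrightarrow> inner (u k) x - a k = 0) \<and> 0 \<le> s k * (inner (u k) x - a k))"
proof -
  have "(sign_vec m u a x k = 0 \<or> sign_vec m u a x k = s k) \<longleftrightarrow>
     ((s k = 0 \<longrightarrow> inner (u k) x - a k = 0) \<and> 0 \<le> s k * (inner (u k) x - a k))" if "k < m" for k
    using signs_vals[OF s, of k] that
    by (auto simp: sv_lt sgn_if not_less zero_le_mult_iff mult_le_0_iff)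
  moreover have "k \<ge> m \<Longrightarrow> sign_vec m u a x k = 0" for k by (simp add: sv_ge)
  ultimately show ?thesis unfolding sle_def by (meson not_le)
qed

lemma closed_weak:
  assumes s: "s \<in> arr_signs m u a"
  shows "closed {x. sle (sign_vec m u a x) s}"
proof -
  have e: "{x. sle (sign_vec m u a x) s} = (\<Inter>k\<in>{..<m}. {x. (s k = 0 \<longrightarrow> inner (u k) x - a k = 0)} \<inter> {x. 0 \<le> s k * (inner (u k) x - a k)})"
    using weak_char[OF s] by auto
  have c1: "closed {x. (s k = 0 \<longrightarrow> inner (u k) x - a k = 0)}" for k
    by (cases "s k = 0") (auto intro!: closed_Collect_eq continuous_intros)
  have c2: "closed {x. 0 \<le> s k * (inner (u k) x - a k)}" for k
    by (auto intro!: closed_Collect_le continuous_intros)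
  show ?thesis unfolding e using c1 c2 by (intro closed_INT ballI closed_Int) auto
qed

lemma closure_cell:
  assumes s: "s \<in> arr_signs m u a"
  shows "closure (cell m u a s) = {x. sle (sign_vec m u a x) s}"
proof
  show "closure (cell m u a s) \<subseteq> {x. sle (sign_vec m u a x) s}"
    by (rule closure_minimal) (auto simp: cell_def intro: closed_weak[OF s])
next
  obtain x0 where x0: "sign_vec m u a x0 = s" using s by (auto simp: arr_signs_def)
  show "{x. sle (sign_vec m u a x) s} \<subseteq> closure (cell m u a s)"
  proof
    fix y assume "y \<in> {x. sle (sign_vec m u a x) s}"
    hence y: "\<forall>k<m. (s k = 0 \<longrightarrow> inner (u k) y - a k = 0) \<and> 0 \<le> s k * (inner (u k) y - a k)"
      using weak_char[OF s] by auto
    have inc: "y + e *\<^sub>R (x0 - y) \<in> cell m u a s" if e: "0 < e" "e \<le> 1" for e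
    proof -
      have "sign_vec m u a (y + e *\<^sub>R (x0 - y)) k = s k" for k
      proof (cases "k < m")
        case False thus ?thesis using signs_ge[OF s] sv_ge by (simp add: not_less)
      next
        case True
        have f: "inner (u k) (y + e *\<^sub>R (x0 - y)) - a k = (1 - e) * (inner (u k) y - a k) + e * (inner (u k) x0 - a k)"
          by (simp add: inner_diff_right inner_add_right algebra_simps)
        have sx0: "sgn (inner (u k) x0 - a k) = s k" using x0 True by (auto simp: sv_lt)
        show ?thesis
        proof (cases "s k = 0")
          case True
          then show ?thesis using y \<open>k<m\<close> sx0 f by (simp add: sv_lt sgn_mult)
        next
          case False
          hence pm: "s k = 1 \<or> s k = -1" using signs_vals[OF s, of k] by auto
          have p1: "s k * (inner (u k) x0 - a k) > 0" using sgn_eq_pm[OF pm] sx0 by auto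
          have p2: "s k * ((1 - e) * (inner (u k) y - a k)) \<ge> 0" using y True e
            by (metis mult.left_commute mult_nonneg_nonneg diff_ge_0_iff_ge)
          have "s k * (inner (u k) (y + e *\<^sub>R (x0 - y)) - a k) > 0"
            unfolding f using p1 p2 e by (simp add: distrib_left) (metis add_nonneg_pos mult.left_commute mult_pos_pos)
          thus ?thesis using sgn_eq_pm[OF pm] True by (simp add: sv_lt)
        qed
      qed
      thus ?thesis by (auto simp: cell_def)
    qed
    show "y \<in> closure (cell m u a s)"
      unfolding closure_approachable
    proof (intro allI impI)
      fix r :: real assume r: "r > 0"
      define e where "e = min 1 (r / (norm (x0 - y) + 1))"
      have "0 < norm (x0 - y) + 1" by (simp add: add_nonneg_pos)
      hence e0: "0 < e" "e \<le> 1" using r by (auto simp: e_def)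
      have "e * norm (x0 - y) < r"
      proof -
        have "e * norm (x0 - y) \<le> (r / (norm (x0 - y) + 1)) * norm (x0 - y)"
          unfolding e_def by (intro mult_right_mono) auto
        also have "\<dots> < r" using r \<open>0 < norm (x0 - y) + 1\<close> by (simp add: field_simps)
        finally show ?thesis .
      qed
      thus "\<exists>x\<in>cell m u a s. dist x y < r"
        using inc[OF e0] e0 by (intro bexI[of _ "y + e *\<^sub>R (x0 - y)"]) (auto simp: dist_norm)
    qed
  qed
qed



lemma support_eqI:
  assumes "x \<in> P" "\<forall>y\<in>P. inner v y \<le> inner v x"
  shows "support_fun P v = ereal (inner v x)"
  unfolding support_fun_def
  by (rule antisym) (auto intro!: SUP_least SUP_upper2[OF assms(1)] simp: assms(2))

lemma support_eqD:
  assumes "support_fun P v = ereal (inner v x)" "y \<in> P"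
  shows "inner v y \<le> inner v x"
proof -
  have "ereal (inner v y) \<le> support_fun P v" unfolding support_fun_def using assms(2) by (rule SUP_upper)
  thus ?thesis using assms(1) by simp
qed

lemma fk_comb: "inner w (x + e *\<^sub>R d) - c = (inner w x - c) + e * inner w d"
  by (simp add: inner_add_right)

lemma normal_cone_cell:
  assumes s: "s \<in> arr_signs m u a" and x: "sle (sign_vec m u a x) s"
  shows "normal_cone_at (closure (cell m u a s)) x = polK m u s (sign_vec m u a x)"
proof -
  let ?t = "sign_vec m u a x"
  have P: "closure (cell m u a s) = {y. sle (sign_vec m u a y) s}" by (rule closure_cell[OF s])
  have wx: "\<forall>k<m. (s k = 0 \<longrightarrow> inner (u k) x - a k = 0) \<and> 0 \<le> s k * (inner (u k) x - a k)"
    using x weak_char[OF s] by auto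
  show ?thesis
  proof
    show "normal_cone_at (closure (cell m u a s)) x \<subseteq> polK m u s ?t"
    proof
      fix v assume "v \<in> normal_cone_at (closure (cell m u a s)) x"
      hence v: "support_fun {y. sle (sign_vec m u a y) s} v = ereal (inner v x)"
        unfolding normal_cone_at_def P by simp
      show "v \<in> polK m u s ?t"
        unfolding polK_def
      proof (intro CollectI allI impI)
        fix d assume d: "\<forall>k<m. ?t k = 0 \<longrightarrow> (s k = 0 \<longrightarrow> inner (u k) d = 0) \<and> 0 \<le> s k * inner (u k) d"
        have ev: "\<forall>\<^sub>F e in at_right (0::real). \<forall>k\<in>{k. k < m \<and> ?t k \<noteq> 0}. 0 < ?t k * ((inner (u k) x - a k) + e * inner (u k) d)"
        proof (rule eventually_ball_finite)
          show "finite {k. k < m \<and> ?t k \<noteq> 0}" by simp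
          show "\<forall>k\<in>{k. k < m \<and> ?t k \<noteq> 0}. \<forall>\<^sub>F e in at_right 0. 0 < ?t k * ((inner (u k) x - a k) + e * inner (u k) d)"
          proof
            fix k assume k: "k \<in> {k. k < m \<and> ?t k \<noteq> 0}"
            have "((\<lambda>e. ?t k * ((inner (u k) x - a k) + e * inner (u k) d)) \<longlongrightarrow> ?t k * ((inner (u k) x - a k) + 0 * inner (u k) d)) (at_right 0)"
              by (intro tendsto_intros)
            moreover have "?t k * ((inner (u k) x - a k) + 0 * inner (u k) d) > 0"
              using k by (auto simp: sv_lt sgn_if mult_less_0_iff)
            ultimately show "\<forall>\<^sub>F e in at_right 0. 0 < ?t k * ((inner (u k) x - a k) + e * inner (u k) d)"
              by (rule order_tendstoD(1))
          qed
        qed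
        have "\<forall>\<^sub>F e in at_right (0::real). 0 < e" by (simp add: eventually_at_right_less)
        with ev have "\<forall>\<^sub>F e in at_right (0::real). 0 < e \<and> (\<forall>k\<in>{k. k < m \<and> ?t k \<noteq> 0}. 0 < ?t k * ((inner (u k) x - a k) + e * inner (u k) d))"
          by (rule eventually_conj[rotated])
        then obtain e where e: "0 < e" "\<forall>k\<in>{k. k < m \<and> ?t k \<noteq> 0}. 0 < ?t k * ((inner (u k) x - a k) + e * inner (u k) d)"
          using eventually_happens[of _ "at_right (0::real)"] by auto
        have "sle (sign_vec m u a (x + e *\<^sub>R d)) s"
          unfolding weak_char[OF s] fk_comb
        proof (intro allI impI, intro conjI)
          fix k assume k: "k < m"
          show "s k = 0 \<longrightarrow> inner (u k) x - a k + e * inner (u k) d = 0"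
          proof
            assume sk: "s k = 0"
            hence "?t k = 0" using x unfolding sle_def by metis
            thus "inner (u k) x - a k + e * inner (u k) d = 0" using d wx k sk by auto
          qed
          show "0 \<le> s k * (inner (u k) x - a k + e * inner (u k) d)"
          proof (cases "?t k = 0")
            case True
            hence "inner (u k) x - a k = 0" using k by (simp add: sv_lt sgn_zero_iff)
            thus ?thesis using d k True e(1) by (simp add: mult.left_commute)
          next
            case False
            hence "?t k = s k" using x unfolding sle_def by metis
            thus ?thesis using e(2) k False by force
          qed
        qed
        hence "inner v (x + e *\<^sub>R d) \<le> inner v x" using support_eqD[OF v] by auto
        hence "e * inner v d \<le> 0" by (simp add: inner_add_right)
        thus "inner v d \<le> 0" using e(1) by (simp add: mult_le_0_iff)
      qed
    qed
  next
    show "polK m u s ?t \<subseteq> normal_cone_at (closure (cell m u a s)) x"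
    proof
      fix v assume v: "v \<in> polK m u s ?t"
      have "\<forall>y\<in>{y. sle (sign_vec m u a y) s}. inner v y \<le> inner v x"
      proof
        fix y assume "y \<in> {y. sle (sign_vec m u a y) s}"
        hence wy: "\<forall>k<m. (s k = 0 \<longrightarrow> inner (u k) y - a k = 0) \<and> 0 \<le> s k * (inner (u k) y - a k)"
          using weak_char[OF s] by auto
        have "\<forall>k<m. ?t k = 0 \<longrightarrow> (s k = 0 \<longrightarrow> inner (u k) (y - x) = 0) \<and> 0 \<le> s k * inner (u k) (y - x)"
        proof (intro allI impI, intro conjI)
          fix k assume k: "k < m" and tk: "?t k = 0"
          hence fx: "inner (u k) x = a k" using k by (simp add: sv_lt sgn_zero_iff)
          show "s k = 0 \<longrightarrow> inner (u k) (y - x) = 0" using wy k fx by (simp add: inner_diff_right)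
          show "0 \<le> s k * inner (u k) (y - x)" using wy k fx by (simp add: inner_diff_right)
        qed
        hence "inner v (y - x) \<le> 0" using v unfolding polK_def by blast
        thus "inner v y \<le> inner v x" by (simp add: inner_diff_right)
      qed
      moreover have "x \<in> {y. sle (sign_vec m u a y) s}" using x by simp
      ultimately have "support_fun {y. sle (sign_vec m u a y) s} v = ereal (inner v x)"
        by (rule support_eqI[rotated])
      thus "v \<in> normal_cone_at (closure (cell m u a s)) x"
        unfolding normal_cone_at_def P by simp
    qed
  qed
qed


lemma weak_sub:
  assumes s: "s \<in> arr_signs m u a" and t: "t \<in> arr_signs m u a" and ts: "sle t s"
  shows "sle (sign_vec m u a y) t \<longleftrightarrow> sle (sign_vec m u a y) s \<and> (\<forall>k<m. t k = 0 \<longrightarrow> inner (u k) y - a k = 0)"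
proof -
  have "((t k = 0 \<longrightarrow> inner (u k) y - a k = 0) \<and> 0 \<le> t k * (inner (u k) y - a k)) \<longleftrightarrow>
        ((s k = 0 \<longrightarrow> inner (u k) y - a k = 0) \<and> 0 \<le> s k * (inner (u k) y - a k)) \<and> (t k = 0 \<longrightarrow> inner (u k) y - a k = 0)" for k
  proof (cases "t k = 0")
    case True thus ?thesis by auto
  next
    case False hence "t k = s k" using ts unfolding sle_def by metis
    thus ?thesis using False by auto
  qed
  thus ?thesis unfolding weak_char[OF s] weak_char[OF t] by blast
qed

lemma convex_weak:
  assumes s: "s \<in> arr_signs m u a"
  shows "convex {y. sle (sign_vec m u a y) s}"
proof (rule convexI, simp only: mem_Collect_eq)
  fix x y and p q :: real
  assume x: "sle (sign_vec m u a x) s" and y: "sle (sign_vec m u a y) s" and pq0: "0 \<le> p" "0 \<le> q" "p + q = 1"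
  hence pq: "0 \<le> p \<and> 0 \<le> q \<and> p + q = 1" by simp
  have wx: "\<forall>k<m. (s k = 0 \<longrightarrow> inner (u k) x - a k = 0) \<and> 0 \<le> s k * (inner (u k) x - a k)"
    using x weak_char[OF s] by auto
  have wy: "\<forall>k<m. (s k = 0 \<longrightarrow> inner (u k) y - a k = 0) \<and> 0 \<le> s k * (inner (u k) y - a k)"
    using y weak_char[OF s] by auto
  have f: "inner (u k) (p *\<^sub>R x + q *\<^sub>R y) - a k = p * (inner (u k) x - a k) + q * (inner (u k) y - a k)" for k
    using pq by (simp add: inner_add_right algebra_simps) (metis add.commute distrib_left mult.commute mult.right_neutral)
  show "sle (sign_vec m u a (p *\<^sub>R x + q *\<^sub>R y)) s"
    unfolding weak_char[OF s] f
  proof (intro allI impI, intro conjI)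
    fix k assume k: "k < m"
    show "s k = 0 \<longrightarrow> p * (inner (u k) x - a k) + q * (inner (u k) y - a k) = 0" using wx wy k by simp
    have h1: "0 \<le> s k * (inner (u k) x - a k)" "0 \<le> s k * (inner (u k) y - a k)" using wx wy k by auto
    have "0 \<le> p * (s k * (inner (u k) x - a k)) + q * (s k * (inner (u k) y - a k))"
      using h1 pq by (simp add: add_nonneg_nonneg)
    thus "0 \<le> s k * (p * (inner (u k) x - a k) + q * (inner (u k) y - a k))"
      by (simp add: algebra_simps)
  qed
qed

lemma face_cell:
  assumes s: "s \<in> arr_signs m u a" and t: "t \<in> arr_signs m u a" and ts: "sle t s"
  shows "closure (cell m u a t) face_of closure (cell m u a s)"
  unfolding closure_cell[OF s] closure_cell[OF t] face_of_def
proof (intro conjI ballI impI)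
  show "{x. sle (sign_vec m u a x) t} \<subseteq> {x. sle (sign_vec m u a x) s}" using sle_trans ts by blast
  show "convex {x. sle (sign_vec m u a x) t}" by (rule convex_weak[OF t])
  fix p q z assume p: "p \<in> {x. sle (sign_vec m u a x) s}" and q: "q \<in> {x. sle (sign_vec m u a x) s}"
    and z: "z \<in> {x. sle (sign_vec m u a x) t}" and zs: "z \<in> open_segment p q"
  obtain e where e: "0 < e" "e < 1" "z = (1 - e) *\<^sub>R p + e *\<^sub>R q" using zs by (auto simp: in_segment)
  have wp: "\<forall>k<m. (s k = 0 \<longrightarrow> inner (u k) p - a k = 0) \<and> 0 \<le> s k * (inner (u k) p - a k)"
    using p weak_char[OF s] by auto
  have wq: "\<forall>k<m. (s k = 0 \<longrightarrow> inner (u k) q - a k = 0) \<and> 0 \<le> s k * (inner (u k) q - a k)"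
    using q weak_char[OF s] by auto
  have wz: "\<forall>k<m. t k = 0 \<longrightarrow> inner (u k) z - a k = 0" using z weak_sub[OF s t ts] by auto
  have f: "inner (u k) z - a k = (1 - e) * (inner (u k) p - a k) + e * (inner (u k) q - a k)" for k
    unfolding e(3) by (simp add: inner_add_right algebra_simps)
  have both: "inner (u k) p - a k = 0 \<and> inner (u k) q - a k = 0" if k: "k < m" "t k = 0" for k
  proof (cases "s k = 0")
    case True thus ?thesis using wp wq k by auto
  next
    case False
    have pm: "s k = 1 \<or> s k = -1" using signs_vals[OF s, of k] False by auto
    have A: "0 \<le> (1 - e) * (s k * (inner (u k) p - a k))" "0 \<le> e * (s k * (inner (u k) q - a k))"
      using wp wq k e by auto
    have "(1 - e) * (s k * (inner (u k) p - a k)) + e * (s k * (inner (u k) q - a k)) = s k * (inner (u k) z - a k)"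
      unfolding f by (simp add: algebra_simps)
    also have "\<dots> = 0" using wz k by simp
    finally have "(1 - e) * (s k * (inner (u k) p - a k)) = 0" "e * (s k * (inner (u k) q - a k)) = 0"
      using A by linarith+
    thus ?thesis using e False by auto
  qed
  show "p \<in> {x. sle (sign_vec m u a x) t}" using p both weak_sub[OF s t ts] by auto
  show "q \<in> {x. sle (sign_vec m u a x) t}" using q both weak_sub[OF s t ts] by auto
qed

lemma cell_rel_interior:
  assumes t: "t \<in> arr_signs m u a" and x: "sign_vec m u a x = t"
  shows "x \<in> rel_interior (closure (cell m u a t))"
  unfolding mem_rel_interior
proof (intro exI conjI)
  let ?T = "\<Inter>k\<in>{k. k < m \<and> t k \<noteq> 0}. {y. 0 < t k * (inner (u k) y - a k)}"
  have op: "open {y. 0 < t k * (inner (u k) y - a k)}" for k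
    by (intro open_Collect_less continuous_intros)
  show "open ?T" by (rule open_INT) (simp_all add: op)
  have "0 < t k * (inner (u k) x - a k)" if "k < m" "t k \<noteq> 0" for k
  proof -
    have pm: "t k = 1 \<or> t k = -1" using signs_vals[OF t, of k] that by auto
    have "sgn (inner (u k) x - a k) = t k" using x that(1) sv_lt[of k m u a x] by simp
    thus ?thesis using sgn_eq_pm[OF pm] by simp
  qed
  moreover have "x \<in> closure (cell m u a t)" using x closure_subset[of "cell m u a t"] by (auto simp: cell_def)
  ultimately show "x \<in> ?T \<inter> closure (cell m u a t)" by blast
  let ?H = "{y. \<forall>k<m. t k = 0 \<longrightarrow> inner (u k) y - a k = 0}"
  have aff: "affine ?H" unfolding affine_def
  proof (intro ballI allI impI, simp only: mem_Collect_eq, intro allI impI)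
    fix y z and p q :: real and k
    assume y: "\<forall>k<m. t k = 0 \<longrightarrow> inner (u k) y - a k = 0" and z: "\<forall>k<m. t k = 0 \<longrightarrow> inner (u k) z - a k = 0"
      and pq: "p + q = 1" and k: "k < m" "t k = 0"
    have "inner (u k) (p *\<^sub>R y + q *\<^sub>R z) - a k = p * (inner (u k) y - a k) + q * (inner (u k) z - a k)"
      using pq by (simp add: inner_add_right algebra_simps) (metis add.commute distrib_left mult.commute mult.right_neutral)
    thus "inner (u k) (p *\<^sub>R y + q *\<^sub>R z) - a k = 0" using y z k by simp
  qed
  have "closure (cell m u a t) \<subseteq> ?H" unfolding closure_cell[OF t] weak_char[OF t] by auto
  hence "affine hull closure (cell m u a t) \<subseteq> ?H" using aff by (intro hull_minimal) auto
  moreover have "?T \<inter> ?H \<subseteq> cell m u a t"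
  proof
    fix y assume y: "y \<in> ?T \<inter> ?H"
    have yT: "0 < t k * (inner (u k) y - a k)" if "k < m" "t k \<noteq> 0" for k
      using y that by blast
    have "y \<in> ?H" using y by (rule IntD2)
    hence yH: "inner (u k) y - a k = 0" if "k < m" "t k = 0" for k
      using that by simp
    have "sign_vec m u a y k = t k" for k
    proof (cases "k < m")
      case False thus ?thesis using signs_ge[OF t, of k] sv_ge[of m k u a y] by simp
    next
      case True
      show ?thesis
      proof (cases "t k = 0")
        case True thus ?thesis using yH[OF \<open>k < m\<close>] \<open>k < m\<close> by (simp add: sv_lt)
      next
        case False
        hence pm: "t k = 1 \<or> t k = -1" using signs_vals[OF t, of k] by auto
        have "0 < t k * (inner (u k) y - a k)" using yT False \<open>k<m\<close> by blast
        thus ?thesis using sgn_eq_pm[OF pm] \<open>k<m\<close> by (simp add: sv_lt)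
      qed
    qed
    thus "y \<in> cell m u a t" by (auto simp: cell_def)
  qed
  ultimately have "?T \<inter> affine hull closure (cell m u a t) \<subseteq> cell m u a t"
    by (meson Int_mono order_refl order_trans)
  thus "?T \<inter> affine hull closure (cell m u a t) \<subseteq> closure (cell m u a t)"
    using closure_subset order_trans by blast
qed
lemma fan_cell:
  assumes s: "s \<in> arr_signs m u a"
  shows "normal_fan (closure (cell m u a s)) = {polK m u s t | t. t \<in> arr_signs m u a \<and> sle t s}"
proof
  show "normal_fan (closure (cell m u a s)) \<subseteq> {polK m u s t | t. t \<in> arr_signs m u a \<and> sle t s}"
  proof
    fix C assume "C \<in> normal_fan (closure (cell m u a s))"
    then obtain G x where G: "G face_of closure (cell m u a s)" "x \<in> rel_interior G" "C = normal_cone_at (closure (cell m u a s)) x"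
      unfolding normal_fan_def by auto
    have "x \<in> closure (cell m u a s)" using G(1,2) face_of_imp_subset rel_interior_subset by blast
    hence xs: "sle (sign_vec m u a x) s" using closure_cell[OF s] by auto
    show "C \<in> {polK m u s t | t. t \<in> arr_signs m u a \<and> sle t s}"
      using G(3) normal_cone_cell[OF s xs] xs by (auto simp: arr_signs_def)
  qed
  show "{polK m u s t | t. t \<in> arr_signs m u a \<and> sle t s} \<subseteq> normal_fan (closure (cell m u a s))"
  proof
    fix C assume "C \<in> {polK m u s t | t. t \<in> arr_signs m u a \<and> sle t s}"
    then obtain t where t: "t \<in> arr_signs m u a" "sle t s" "C = polK m u s t" by auto
    obtain x where x: "sign_vec m u a x = t" using t(1) by (auto simp: arr_signs_def)
    have "C = normal_cone_at (closure (cell m u a s)) x" using normal_cone_cell[OF s, of x] x t by simp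
    moreover have "closure (cell m u a t) face_of closure (cell m u a s)" by (rule face_cell[OF s t(1,2)])
    moreover have "x \<in> rel_interior (closure (cell m u a t))" by (rule cell_rel_interior[OF t(1) x])
    ultimately show "C \<in> normal_fan (closure (cell m u a s))" unfolding normal_fan_def by blast
  qed
qed



lemma faces_image: "arr_faces m u a = (\<lambda>s. closure (cell m u a s)) ` arr_signs m u a"
  unfolding arr_faces_def cell_def by auto

lemma cl_sub:
  assumes s: "s \<in> arr_signs m u a" and t: "t \<in> arr_signs m u a"
  shows "closure (cell m u a t) \<subseteq> closure (cell m u a s) \<longleftrightarrow> sle t s"
proof
  assume h: "closure (cell m u a t) \<subseteq> closure (cell m u a s)"
  obtain x where x: "sign_vec m u a x = t" using t by (auto simp: arr_signs_def)
  have "x \<in> cell m u a t" using x by (simp add: cell_def)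
  hence "x \<in> closure (cell m u a t)" using closure_subset by blast
  hence "x \<in> closure (cell m u a s)" using h by blast
  thus "sle t s" using x closure_cell[OF s] by auto
next
  assume "sle t s"
  thus "closure (cell m u a t) \<subseteq> closure (cell m u a s)"
    unfolding closure_cell[OF s] closure_cell[OF t] using sle_trans by blast
qed

lemma cl_inj: "inj_on (\<lambda>s. closure (cell m u a s)) (arr_signs m u a)"
  by (rule inj_onI) (metis cl_sub order_refl sle_antisym)

lemma if_direction:
  assumes eq: "arr_signs m u a = arr_signs m u b"
  shows "arr_normally_equiv (arr_faces m u a) (arr_faces m u b)"
proof -
  let ?S = "arr_signs m u a"
  define fa where "fa = (\<lambda>s. closure (cell m u a s))"
  define fb where "fb = (\<lambda>s. closure (cell m u b s))"
  define \<Psi> where "\<Psi> = fb \<circ> inv_into ?S fa"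
  have ia: "inj_on fa ?S" unfolding fa_def by (rule cl_inj)
  have ib: "inj_on fb ?S" unfolding fb_def eq by (rule cl_inj)
  have Fa: "arr_faces m u a = fa ` ?S" unfolding fa_def by (rule faces_image)
  have Fb: "arr_faces m u b = fb ` ?S" unfolding fb_def eq by (rule faces_image)
  have Psi: "\<Psi> (fa s) = fb s" if "s \<in> ?S" for s
    unfolding \<Psi>_def using inv_into_f_f[OF ia that] by simp
  show ?thesis unfolding arr_normally_equiv_def
  proof (intro exI conjI ballI)
    have "bij_betw (inv_into ?S fa) (fa ` ?S) ?S" by (rule bij_betw_inv_into[OF inj_on_imp_bij_betw[OF ia]])
    moreover have "bij_betw fb ?S (fb ` ?S)" by (rule inj_on_imp_bij_betw[OF ib])
    ultimately show "bij_betw \<Psi> (arr_faces m u a) (arr_faces m u b)"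
      unfolding \<Psi>_def Fa Fb by (rule bij_betw_trans)
  next
    fix G H assume "G \<in> arr_faces m u a" "H \<in> arr_faces m u a"
    then obtain s t where st: "s \<in> ?S" "t \<in> ?S" "G = fa s" "H = fa t" unfolding Fa by auto
    have sb: "s \<in> arr_signs m u b" "t \<in> arr_signs m u b" using st eq by auto
    show "G \<subseteq> H \<longleftrightarrow> \<Psi> G \<subseteq> \<Psi> H"
      unfolding st(3,4) Psi[OF st(1)] Psi[OF st(2)] unfolding fa_def fb_def
      using cl_sub[OF st(2) st(1)] cl_sub[OF sb(2) sb(1)] by simp
  next
    fix G assume "G \<in> arr_faces m u a"
    then obtain s where s: "s \<in> ?S" "G = fa s" unfolding Fa by auto
    have sb: "s \<in> arr_signs m u b" using s eq by auto
    show "normally_equiv G (\<Psi> G)"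
      unfolding normally_equiv_def s(2) Psi[OF s(1)] unfolding fa_def fb_def
      fan_cell[OF s(1)] fan_cell[OF sb] eq ..
  qed
qed



lemma line_lemma:
  fixes u v :: "'a::euclidean_space"
  assumes u: "u \<noteq> 0" and h: "\<forall>d. inner u d = 0 \<longrightarrow> inner v d \<le> 0"
  shows "\<exists>c. v = c *\<^sub>R u"
proof -
  define c where "c = inner v u / inner u u"
  define d where "d = v - c *\<^sub>R u"
  have uu: "inner u u \<noteq> 0" using u by simp
  have ud: "inner u d = 0" unfolding d_def c_def using uu by (simp add: inner_diff_right inner_commute)
  have "inner v d \<le> 0" using h ud by blast
  moreover have "inner v (-d) \<le> 0" using h ud by (metis inner_minus_right neg_0_equal_iff_equal)
  ultimately have vd: "inner v d = 0" by (simp add: inner_minus_right)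
  have "inner d d = inner v d - c * inner u d" unfolding d_def by (simp add: inner_diff_left inner_commute)
  hence "inner d d = 0" using vd ud by simp
  hence "d = 0" by simp
  thus ?thesis unfolding d_def by auto
qed

lemma polK_vacuous:
  assumes "\<forall>k<m. t k \<noteq> 0" and "v \<in> polK m u s t"
  shows "v = 0"
proof -
  have "inner v v \<le> 0" using assms unfolding polK_def by blast
  thus ?thesis by (metis inner_eq_zero_iff inner_ge_zero order_antisym)
qed

lemma Z_lemma:
  fixes u :: "nat \<Rightarrow> 'a::euclidean_space"
  assumes nonzero: "\<forall>i<m. u i \<noteq> 0"
    and nonparallel: "\<forall>i<m. \<forall>j<m. i \<noteq> j \<longrightarrow> (\<nexists>c. u j = c *\<^sub>R u i)"
    and g: "g \<in> arr_signs m u a" and i: "i < m" "g i = 0" and gz: "\<forall>k<m. k \<noteq> i \<longrightarrow> g k \<noteq> 0"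
    and g': "g' \<in> arr_signs m u b"
    and fan: "normal_fan (closure (cell m u a g)) = normal_fan (closure (cell m u b g'))"
  shows "\<forall>k<m. g' k = 0 \<longleftrightarrow> k = i"
proof -
  have "polK m u g g \<in> normal_fan (closure (cell m u a g))" unfolding fan_cell[OF g] using g by auto
  then obtain t' where t': "t' \<in> arr_signs m u b" "sle t' g'" "polK m u g g = polK m u g' t'"
    unfolding fan fan_cell[OF g'] by auto
  have C0: "\<exists>c. v = c *\<^sub>R u i" if "v \<in> polK m u g g" for v
  proof (rule line_lemma)
    show "u i \<noteq> 0" using nonzero i by auto
    show "\<forall>d. inner (u i) d = 0 \<longrightarrow> inner v d \<le> 0"
    proof (intro allI impI)
      fix d assume d: "inner (u i) d = 0"
      have "\<forall>k<m. g k = 0 \<longrightarrow> (g k = 0 \<longrightarrow> inner (u k) d = 0) \<and> 0 \<le> g k * inner (u k) d"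
        using d gz by auto
      thus "inner v d \<le> 0" using that unfolding polK_def by blast
    qed
  qed
  have A: "k = i" if k: "k < m" "g' k = 0" for k
  proof -
    have "t' k = 0" using t'(2) k unfolding sle_def by metis
    hence "u k \<in> polK m u g' t'" using k unfolding polK_def by auto
    then obtain c where "u k = c *\<^sub>R u i" using C0 t'(3) by auto
    thus "k = i" using nonparallel k i by blast
  qed
  have B: "g' i = 0"
  proof (rule ccontr)
    assume gi: "g' i \<noteq> 0"
    hence allnz: "\<forall>k<m. g' k \<noteq> 0" using A by metis
    have "polK m u g' g' \<in> normal_fan (closure (cell m u b g'))" unfolding fan_cell[OF g'] using g' by auto
    then obtain t where t: "t \<in> arr_signs m u a" "sle t g" "polK m u g' g' = polK m u g t"
      unfolding fan[symmetric] fan_cell[OF g] by auto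
    have "t i = 0" using t(2) i unfolding sle_def by metis
    hence "u i \<in> polK m u g t" using i unfolding polK_def by auto
    hence "u i = 0" using polK_vacuous[OF allnz] t(3) by auto
    thus False using nonzero i by auto
  qed
  show ?thesis using A B by blast
qed

lemma pm_sq: "(r::real) = 1 \<or> r = -1 \<Longrightarrow> r * r = 1" by auto

lemma base_lemma:
  fixes u :: "nat \<Rightarrow> 'a::euclidean_space"
  assumes nonzero: "\<forall>i<m. u i \<noteq> 0"
    and nonparallel: "\<forall>i<m. \<forall>j<m. i \<noteq> j \<longrightarrow> (\<nexists>c. u j = c *\<^sub>R u i)"
    and s: "s \<in> arr_signs m u a" and snz: "\<forall>k<m. s k \<noteq> 0"
    and t0: "t0 \<in> arr_signs m u a" "sle t0 s" and j: "j < m" "t0 j = 0" and tz: "\<forall>k<m. k \<noteq> j \<longrightarrow> t0 k \<noteq> 0"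
    and s': "s' \<in> arr_signs m u b"
    and fan: "normal_fan (closure (cell m u a s)) = normal_fan (closure (cell m u b s'))"
  shows "s' j = s j"
proof -
  define w where "w = - (s j) *\<^sub>R u j"
  have sjpm: "s j = 1 \<or> s j = -1" using signs_vals[OF s, of j] snz j by auto
  have uj: "u j \<noteq> 0" using nonzero j by auto
  have wnz: "w \<noteq> 0" using sjpm uj unfolding w_def by auto
  have "polK m u s t0 \<in> normal_fan (closure (cell m u a s))" unfolding fan_cell[OF s] using t0 by auto
  then obtain t' where t': "t' \<in> arr_signs m u b" "sle t' s'" "polK m u s t0 = polK m u s' t'"
    unfolding fan fan_cell[OF s'] by auto
  have prem: "(\<forall>k<m. t0 k = 0 \<longrightarrow> (s k = 0 \<longrightarrow> inner (u k) d = 0) \<and> 0 \<le> s k * inner (u k) d)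
     \<longleftrightarrow> 0 \<le> s j * inner (u j) d" for d
  proof
    assume H: "\<forall>k<m. t0 k = 0 \<longrightarrow> (s k = 0 \<longrightarrow> inner (u k) d = 0) \<and> 0 \<le> s k * inner (u k) d"
    show "0 \<le> s j * inner (u j) d" using H j by blast
  next
    assume H: "0 \<le> s j * inner (u j) d"
    show "\<forall>k<m. t0 k = 0 \<longrightarrow> (s k = 0 \<longrightarrow> inner (u k) d = 0) \<and> 0 \<le> s k * inner (u k) d"
    proof (intro allI impI)
      fix k assume k: "k < m" "t0 k = 0"
      hence "k = j" using tz by blast
      thus "(s k = 0 \<longrightarrow> inner (u k) d = 0) \<and> 0 \<le> s k * inner (u k) d" using H snz j by blast
    qed
  qed
  have polC: "polK m u s t0 = {v. \<forall>d. 0 \<le> s j * inner (u j) d \<longrightarrow> inner v d \<le> 0}"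
    unfolding polK_def prem ..
  have wC: "w \<in> polK m u s t0" unfolding polC w_def by (auto simp: inner_minus_left)
  have ray: "\<exists>c\<ge>0. v = c *\<^sub>R w" if v: "v \<in> polK m u s t0" for v
  proof -
    have v': "\<forall>d. 0 \<le> s j * inner (u j) d \<longrightarrow> inner v d \<le> 0" using v unfolding polC by simp
    obtain c where c: "v = c *\<^sub>R u j"
      using line_lemma[OF uj] v' by (metis mult_zero_right order_refl)
    have "0 \<le> s j * inner (u j) (s j *\<^sub>R u j)" using pm_sq[OF sjpm] by (simp add: mult.assoc[symmetric])
    hence "inner v (s j *\<^sub>R u j) \<le> 0" using v' by blast
    hence "c * s j * inner (u j) (u j) \<le> 0" unfolding c by (simp add: algebra_simps)
    moreover have "inner (u j) (u j) > 0" using uj by simp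
    ultimately have cs: "c * s j \<le> 0" by (simp add: mult_le_0_iff)
    have "v = (- (c * s j)) *\<^sub>R w" unfolding c w_def using pm_sq[OF sjpm] by (simp add: mult.assoc)
    thus ?thesis using cs by (intro exI[of _ "- (c * s j)"]) auto
  qed
  have "\<exists>k<m. t' k = 0"
  proof (rule ccontr)
    assume "\<not> (\<exists>k<m. t' k = 0)"
    hence "\<forall>k<m. t' k \<noteq> 0" by auto
    hence "w = 0" using polK_vacuous wC t'(3) by metis
    thus False using wnz by simp
  qed
  then obtain k where k: "k < m" "t' k = 0" by auto
  have uk: "u k \<noteq> 0" using nonzero k by auto
  have s'k: "s' k \<noteq> 0"
  proof
    assume s'k0: "s' k = 0"
    have "u k \<in> polK m u s' t'" "- u k \<in> polK m u s' t'" using k s'k0 unfolding polK_def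
      by (auto simp: inner_minus_left)
    then obtain c1 c2 where c: "c1 \<ge> 0" "u k = c1 *\<^sub>R w" "c2 \<ge> 0" "- u k = c2 *\<^sub>R w"
      using ray t'(3) by metis
    have "(c1 + c2) *\<^sub>R w = u k + (- u k)" using c(2,4) by (simp add: scaleR_left_distrib)
    hence "(c1 + c2) *\<^sub>R w = 0" by simp
    hence "c1 + c2 = 0" using wnz by simp
    hence "c1 = 0" using c by simp
    thus False using c uk by simp
  qed
  have s'pm: "s' k = 1 \<or> s' k = -1" using signs_vals[OF s', of k] s'k by auto
  have "- (s' k) *\<^sub>R u k \<in> polK m u s' t'" using k unfolding polK_def by (auto simp: inner_minus_left)
  then obtain c where c: "c \<ge> 0" "- (s' k) *\<^sub>R u k = c *\<^sub>R w" using ray t'(3) by metis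
  have "u k = (s' k * c * s j) *\<^sub>R u j"
  proof -
    have "u k = (- s' k) *\<^sub>R (- (s' k) *\<^sub>R u k)" using pm_sq[OF s'pm] by simp
    also have "\<dots> = (s' k * c * s j) *\<^sub>R u j" unfolding c(2) w_def by (simp add: mult.assoc)
    finally show ?thesis .
  qed
  hence kj: "k = j" using nonparallel k j by blast
  have "- (s' j *\<^sub>R u j) = - ((c * s j) *\<^sub>R u j)"
    using c(2) unfolding kj w_def by simp
  hence "s' j *\<^sub>R u j = (c * s j) *\<^sub>R u j" by simp
  hence "s' j = c * s j" using uj by (metis scaleR_cancel_right)
  thus ?thesis using sjpm s'pm kj c(1) by auto
qed



lemma avoid_hyps:
  fixes c :: "nat \<Rightarrow> 'a::euclidean_space"
  assumes S: "open S" "S \<noteq> {}" and I: "finite I" and c: "\<forall>i\<in>I. c i \<noteq> 0"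
  shows "\<exists>x\<in>S. \<forall>i\<in>I. inner (c i) x \<noteq> e i"
proof (rule ccontr)
  assume "\<not> (\<exists>x\<in>S. \<forall>i\<in>I. inner (c i) x \<noteq> e i)"
  hence sub: "S \<subseteq> \<Union> ((\<lambda>i. {x. c i \<bullet> x = e i}) ` I)" by auto
  have "negligible (\<Union> ((\<lambda>i. {x. c i \<bullet> x = e i}) ` I))"
  proof (rule negligible_Union)
    show "finite ((\<lambda>i. {x. c i \<bullet> x = e i}) ` I)" using I by simp
    show "\<And>T. T \<in> (\<lambda>i. {x. c i \<bullet> x = e i}) ` I \<Longrightarrow> negligible T"
      using c negligible_hyperplane by blast
  qed
  hence "negligible S" using sub negligible_subset by blast
  thus False using open_not_negligible[OF S] by simp
qed

lemma perturb:
  assumes d: "\<forall>l<m. inner (u l) d \<noteq> 0"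
  shows "\<exists>e>0. \<forall>l<m. sign_vec m u a (x + e *\<^sub>R d) l =
     (if sign_vec m u a x l = 0 then sgn (inner (u l) d) else sign_vec m u a x l)"
proof -
  let ?t = "sign_vec m u a x"
  have ev: "\<forall>\<^sub>F e in at_right (0::real). \<forall>k\<in>{k. k < m \<and> ?t k \<noteq> 0}. 0 < ?t k * ((inner (u k) x - a k) + e * inner (u k) d)"
  proof (rule eventually_ball_finite)
    show "finite {k. k < m \<and> ?t k \<noteq> 0}" by simp
    show "\<forall>k\<in>{k. k < m \<and> ?t k \<noteq> 0}. \<forall>\<^sub>F e in at_right 0. 0 < ?t k * ((inner (u k) x - a k) + e * inner (u k) d)"
    proof
      fix k assume k: "k \<in> {k. k < m \<and> ?t k \<noteq> 0}"
      have "((\<lambda>e. ?t k * ((inner (u k) x - a k) + e * inner (u k) d)) \<longlongrightarrow> ?t k * ((inner (u k) x - a k) + 0 * inner (u k) d)) (at_right 0)"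
        by (intro tendsto_intros)
      moreover have "?t k * ((inner (u k) x - a k) + 0 * inner (u k) d) > 0"
        using k by (auto simp: sv_lt sgn_if mult_less_0_iff)
      ultimately show "\<forall>\<^sub>F e in at_right 0. 0 < ?t k * ((inner (u k) x - a k) + e * inner (u k) d)"
        by (rule order_tendstoD(1))
    qed
  qed
  have "\<forall>\<^sub>F e in at_right (0::real). 0 < e" by (simp add: eventually_at_right_less)
  with ev have "\<forall>\<^sub>F e in at_right (0::real). 0 < e \<and> (\<forall>k\<in>{k. k < m \<and> ?t k \<noteq> 0}. 0 < ?t k * ((inner (u k) x - a k) + e * inner (u k) d))"
    by (rule eventually_conj[rotated])
  then obtain e where e: "0 < e" "\<forall>k\<in>{k. k < m \<and> ?t k \<noteq> 0}. 0 < ?t k * ((inner (u k) x - a k) + e * inner (u k) d)"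
    using eventually_happens[of _ "at_right (0::real)"] by auto
  have "sign_vec m u a (x + e *\<^sub>R d) l = (if ?t l = 0 then sgn (inner (u l) d) else ?t l)" if l: "l < m" for l
  proof (cases "?t l = 0")
    case True
    hence "inner (u l) x - a l = 0" using l by (simp add: sv_lt sgn_zero_iff)
    hence "inner (u l) (x + e *\<^sub>R d) - a l = e * inner (u l) d" by (simp add: inner_add_right)
    thus ?thesis using True l e(1) by (simp add: sv_lt sgn_mult)
  next
    case False
    have pm: "?t l = 1 \<or> ?t l = -1" using sv_vals[of m u a x l] False by auto
    have "0 < ?t l * (inner (u l) (x + e *\<^sub>R d) - a l)" using e(2) l False by (simp add: inner_add_right algebra_simps)
    hence "sgn (inner (u l) (x + e *\<^sub>R d) - a l) = ?t l" using sgn_eq_pm[OF pm] by blast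
    thus ?thesis using False l by (simp add: sv_lt)
  qed
  thus ?thesis using e(1) by blast
qed

lemma region_above:
  fixes u :: "nat \<Rightarrow> 'a::euclidean_space"
  assumes nonzero: "\<forall>i<m. u i \<noteq> 0" and k: "k < m" and \<sigma>: "\<sigma> = 1 \<or> \<sigma> = -1"
  shows "\<exists>y. sle (sign_vec m u a x) (sign_vec m u a y) \<and> (\<forall>l<m. sign_vec m u a y l \<noteq> 0)
      \<and> (sign_vec m u a x k = 0 \<longrightarrow> sign_vec m u a y k = \<sigma>)"
proof -
  obtain d0 :: 'a where d0: "\<forall>l\<in>{..<m}. inner (u l) d0 \<noteq> 0"
    using avoid_hyps[of UNIV "{..<m}" u "\<lambda>_. 0"] nonzero by auto
  define d where "d = (if 0 < \<sigma> * inner (u k) d0 then d0 else - d0)"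
  have dnz: "\<forall>l<m. inner (u l) d \<noteq> 0" using d0 unfolding d_def by (auto simp: inner_minus_right)
  have "0 < \<sigma> * inner (u k) d"
  proof (cases "0 < \<sigma> * inner (u k) d0")
    case True thus ?thesis by (simp add: d_def)
  next
    case False
    have nz: "\<sigma> * inner (u k) d0 \<noteq> 0" using d0 k \<sigma> by auto
    have "\<sigma> * inner (u k) d = - (\<sigma> * inner (u k) d0)" using False by (simp add: d_def inner_minus_right)
    thus ?thesis using False nz by linarith
  qed
  hence dk: "sgn (inner (u k) d) = \<sigma>" using sgn_eq_pm[OF \<sigma>] by blast
  obtain e where e: "e > 0" "\<forall>l<m. sign_vec m u a (x + e *\<^sub>R d) l =
     (if sign_vec m u a x l = 0 then sgn (inner (u l) d) else sign_vec m u a x l)"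
    using perturb[OF dnz] by blast
  show ?thesis
  proof (intro exI conjI)
    show "sle (sign_vec m u a x) (sign_vec m u a (x + e *\<^sub>R d))"
      unfolding sle_def
    proof
      fix l show "sign_vec m u a x l = 0 \<or> sign_vec m u a x l = sign_vec m u a (x + e *\<^sub>R d) l"
      proof (cases "l < m")
        case True thus ?thesis using e(2)[rule_format, OF True] by (cases "sign_vec m u a x l = 0") simp_all
      next
        case False thus ?thesis using sv_ge[of m l u a x] by simp
      qed
    qed
    show "\<forall>l<m. sign_vec m u a (x + e *\<^sub>R d) l \<noteq> 0"
    proof (intro allI impI)
      fix l assume l: "l < m"
      show "sign_vec m u a (x + e *\<^sub>R d) l \<noteq> 0"
        using e(2)[rule_format, OF l] dnz l by (cases "sign_vec m u a x l = 0") (simp_all add: sgn_zero_iff)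
    qed
    show "sign_vec m u a x k = 0 \<longrightarrow> sign_vec m u a (x + e *\<^sub>R d) k = \<sigma>"
      using e(2)[rule_format, OF k] dk by simp
  qed
qed

lemma open_cell:
  assumes s: "s \<in> arr_signs m u a" and nz: "\<forall>l<m. s l \<noteq> 0"
  shows "open (cell m u a s)"
proof -
  have "cell m u a s = (\<Inter>l\<in>{..<m}. {x. 0 < s l * (inner (u l) x - a l)})"
  proof (intro set_eqI iffI)
    fix x assume "x \<in> cell m u a s"
    hence x: "sign_vec m u a x = s" by (simp add: cell_def)
    show "x \<in> (\<Inter>l\<in>{..<m}. {x. 0 < s l * (inner (u l) x - a l)})"
    proof (intro INT_I CollectI)
      fix l assume l: "l \<in> {..<m}"
      have pm: "s l = 1 \<or> s l = -1" using signs_vals[OF s, of l] nz l by auto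
      have "sgn (inner (u l) x - a l) = s l" using x l sv_lt[of l m u a x] by simp
      thus "0 < s l * (inner (u l) x - a l)" using sgn_eq_pm[OF pm] by blast
    qed
  next
    fix x assume x: "x \<in> (\<Inter>l\<in>{..<m}. {x. 0 < s l * (inner (u l) x - a l)})"
    have "sign_vec m u a x l = s l" for l
    proof (cases "l < m")
      case False thus ?thesis using signs_ge[OF s, of l] sv_ge[of m l u a x] by simp
    next
      case True
      have pm: "s l = 1 \<or> s l = -1" using signs_vals[OF s, of l] nz True by auto
      have "0 < s l * (inner (u l) x - a l)" using x True by blast
      thus ?thesis using sgn_eq_pm[OF pm] True sv_lt[of l m u a x] by simp
    qed
    thus "x \<in> cell m u a s" by (auto simp: cell_def)
  qed
  moreover have "open (\<Inter>l\<in>{..<m}. {x. 0 < s l * (inner (u l) x - a l)})"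
  proof (rule open_INT)
    show "finite {..<m}" by simp
    show "\<forall>l\<in>{..<m}. open {x. 0 < s l * (inner (u l) x - a l)}"
      by (intro ballI open_Collect_less continuous_intros)
  qed
  ultimately show ?thesis by simp
qed



lemma line_f: "inner w (x + l *\<^sub>R (y - x)) - c = (1 - l) * (inner w x - c) + l * (inner w y - c)"
  by (simp add: inner_add_right inner_diff_right algebra_simps)

lemma line_inner: "inner w (x + l *\<^sub>R (y - x)) = (1 - l) * inner w x + l * inner w y"
  by (simp add: inner_add_right inner_diff_right algebra_simps)

locale wctx =
  fixes m :: nat and u :: "nat \<Rightarrow> 'a::euclidean_space" and a b :: "nat \<Rightarrow> real"
    and \<Psi> :: "'a set \<Rightarrow> 'a set" and j :: nat and y :: 'a
  assumes nonzero: "\<forall>i<m. u i \<noteq> 0"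
    and nonparallel: "\<forall>i<m. \<forall>j<m. i \<noteq> j \<longrightarrow> (\<nexists>c. u j = c *\<^sub>R u i)"
    and bij: "bij_betw \<Psi> (arr_faces m u a) (arr_faces m u b)"
    and ord: "\<forall>G\<in>arr_faces m u a. \<forall>H\<in>arr_faces m u a. G \<subseteq> H \<longleftrightarrow> \<Psi> G \<subseteq> \<Psi> H"
    and ne: "\<forall>G\<in>arr_faces m u a. normally_equiv G (\<Psi> G)"
    and jm: "j < m" and yj: "inner (u j) y = a j" and yg: "\<forall>i<m. i \<noteq> j \<longrightarrow> inner (u i) y \<noteq> a i"
begin

definition fx :: "'a \<Rightarrow> nat \<Rightarrow> real" where "fx x l = inner (u l) x - a l"

definition cc :: "nat \<Rightarrow> nat \<Rightarrow> 'a" where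
  "cc i k = fx y k *\<^sub>R u i - fx y i *\<^sub>R u k"

definition good :: "'a \<Rightarrow> bool" where
  "good x \<longleftrightarrow> (\<forall>i<m. \<forall>k<m. i \<noteq> j \<longrightarrow> k \<noteq> j \<longrightarrow> i \<noteq> k \<longrightarrow> inner (cc i k) x \<noteq> inner (cc i k) y)"

definition D :: "'a \<Rightarrow> nat set" where
  "D x = {i. i < m \<and> i \<noteq> j \<and> sgn (fx x i) \<noteq> sgn (fx y i)}"

definition P :: "(nat \<Rightarrow> real) \<Rightarrow> bool" where
  "P s \<longleftrightarrow> (\<forall>s'. s' \<in> arr_signs m u b \<longrightarrow> \<Psi> (closure (cell m u a s)) = closure (cell m u b s') \<longrightarrow> s' j = s j)"

definition region :: "'a \<Rightarrow> bool" where
  "region x \<longleftrightarrow> (\<forall>l<m. sign_vec m u a x l \<noteq> 0)"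

lemma sv_fx: "l < m \<Longrightarrow> sign_vec m u a x l = sgn (fx x l)"
  by (simp add: sv_lt fx_def)

lemma image_rep:
  assumes s: "s \<in> arr_signs m u a"
  shows "\<exists>s'\<in>arr_signs m u b. \<Psi> (closure (cell m u a s)) = closure (cell m u b s')"
proof -
  have "closure (cell m u a s) \<in> arr_faces m u a" unfolding faces_image using s by blast
  hence "\<Psi> (closure (cell m u a s)) \<in> arr_faces m u b" using bij bij_betwE by blast
  thus ?thesis unfolding faces_image by blast
qed

lemma fan_eq:
  assumes s: "s \<in> arr_signs m u a" and s': "\<Psi> (closure (cell m u a s)) = closure (cell m u b s')"
  shows "normal_fan (closure (cell m u a s)) = normal_fan (closure (cell m u b s'))"
proof -
  have "closure (cell m u a s) \<in> arr_faces m u a" unfolding faces_image using s by blast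
  thus ?thesis using ne s' unfolding normally_equiv_def by metis
qed

lemma mono_Psi:
  assumes "g \<in> arr_signs m u a" "s \<in> arr_signs m u a" "sle g s"
  shows "\<Psi> (closure (cell m u a g)) \<subseteq> \<Psi> (closure (cell m u a s))"
proof -
  have "closure (cell m u a g) \<in> arr_faces m u a" "closure (cell m u a s) \<in> arr_faces m u a"
    unfolding faces_image using assms by blast+
  moreover have "closure (cell m u a g) \<subseteq> closure (cell m u a s)" using cl_sub assms by blast
  ultimately show ?thesis using ord by blast
qed

lemma base:
  assumes x: "region x" and Dx: "D x = {}"
  shows "P (sign_vec m u a x)"
  unfolding P_def
proof (intro allI impI)
  let ?s = "sign_vec m u a x" and ?t = "sign_vec m u a y"
  fix s' assume s': "s' \<in> arr_signs m u b" "\<Psi> (closure (cell m u a ?s)) = closure (cell m u b s')"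
  have sS: "?s \<in> arr_signs m u a" "?t \<in> arr_signs m u a" by (auto simp: arr_signs_def)
  have tj: "?t j = 0" using jm yj by (simp add: sv_lt)
  have tz: "\<forall>k<m. k \<noteq> j \<longrightarrow> ?t k \<noteq> 0" using yg by (simp add: sv_lt sgn_zero_iff)
  have "sle ?t ?s" unfolding sle_def
  proof
    fix l show "?t l = 0 \<or> ?t l = ?s l"
    proof (cases "l < m \<and> l \<noteq> j")
      case True
      hence "l \<notin> D x" using Dx by auto
      thus ?thesis using True by (simp add: D_def sv_fx)
    next
      case False thus ?thesis using tj sv_ge[of m l u a y] by (cases "l < m") auto
    qed
  qed
  show "s' j = ?s j"
    by (rule base_lemma[OF nonzero nonparallel sS(1) _ sS(2) \<open>sle ?t ?s\<close> jm tj tz s'(1) fan_eq[OF sS(1) s'(2)]])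
       (use x in \<open>simp add: region_def\<close>)
qed

lemma fx_line: "fx (x + l *\<^sub>R (y - x)) k = (1 - l) * fx x k + l * fx y k"
  unfolding fx_def by (rule line_f)

lemma fy_j: "fx y j = 0" using yj by (simp add: fx_def)

lemma fy_nz: "k < m \<Longrightarrow> k \<noteq> j \<Longrightarrow> fx y k \<noteq> 0" using yg by (simp add: fx_def)

lemma fx_nz: "region x \<Longrightarrow> k < m \<Longrightarrow> fx x k \<noteq> 0"
  unfolding region_def by (metis sgn_zero_iff sv_fx)

lemma sgn_pm: "(r::real) \<noteq> 0 \<Longrightarrow> sgn r = 1 \<or> sgn r = -1"
  by (auto simp: sgn_if)

lemma sgn_nonD:
  assumes x: "region x" and k: "k < m" "k \<noteq> j" "k \<notin> D x" and l: "0 \<le> l" "l \<le> 1"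
  shows "sgn (fx (x + l *\<^sub>R (y - x)) k) = sgn (fx x k)"
proof -
  have nz: "fx x k \<noteq> 0" "fx y k \<noteq> 0" using fx_nz[OF x k(1)] fy_nz[OF k(1,2)] by auto
  have same: "sgn (fx y k) = sgn (fx x k)" using k unfolding D_def by auto
  have pm: "sgn (fx x k) = 1 \<or> sgn (fx x k) = -1" using sgn_pm[OF nz(1)] .
  have A: "0 < sgn (fx x k) * fx x k" using sgn_eq_pm[OF pm] by blast
  have B: "0 < sgn (fx x k) * fx y k" using sgn_eq_pm[OF pm] same by simp
  have "0 < (1 - l) * (sgn (fx x k) * fx x k) + l * (sgn (fx x k) * fx y k)"
  proof (cases "l = 0")
    case True thus ?thesis using A by simp
  next
    case False
    hence "0 < l * (sgn (fx x k) * fx y k)" using l B by simp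
    moreover have "0 \<le> (1 - l) * (sgn (fx x k) * fx x k)" using l A by simp
    ultimately show ?thesis by linarith
  qed
  hence "0 < sgn (fx x k) * fx (x + l *\<^sub>R (y - x)) k" unfolding fx_line by (simp add: algebra_simps)
  thus ?thesis using sgn_eq_pm[OF pm] by blast
qed

lemma sgn_j:
  assumes "l < 1"
  shows "sgn (fx (x + l *\<^sub>R (y - x)) j) = sgn (fx x j)"
  using assms unfolding fx_line fy_j by (simp add: sgn_mult)

definition lam :: "'a \<Rightarrow> nat \<Rightarrow> real" where "lam x k = fx x k / (fx x k - fx y k)"

lemma D_props:
  assumes x: "region x" and k: "k \<in> D x"
  shows "fx x k * fx y k < 0" "0 < lam x k" "lam x k < 1" "sgn (fx y k) = - sgn (fx x k)"
proof -
  have k': "k < m" "k \<noteq> j" "sgn (fx x k) \<noteq> sgn (fx y k)" using k unfolding D_def by auto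
  have nz: "fx x k \<noteq> 0" "fx y k \<noteq> 0" using fx_nz[OF x k'(1)] fy_nz[OF k'(1,2)] by auto
  show neg: "fx x k * fx y k < 0" using nz k'(3)
    by (auto simp: sgn_if mult_less_0_iff split: if_splits)
  show "sgn (fx y k) = - sgn (fx x k)" using nz k'(3) by (auto simp: sgn_if split: if_splits)
  show "0 < lam x k" "lam x k < 1" using neg unfolding lam_def
    by (auto simp: mult_less_0_iff divide_pos_pos divide_neg_neg field_simps)
qed

lemma sgn_D:
  assumes x: "region x" and k: "k \<in> D x"
  shows "sgn (fx (x + l *\<^sub>R (y - x)) k) = sgn (fx x k) * sgn (lam x k - l)"
proof -
  have neg: "fx x k * fx y k < 0" using D_props[OF x k] by simp
  hence dnz: "fx x k - fx y k \<noteq> 0" by (auto simp: mult_less_0_iff)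
  have sd: "sgn (fx x k - fx y k) = sgn (fx x k)" using neg
    by (auto simp: mult_less_0_iff sgn_if)
  have "fx (x + l *\<^sub>R (y - x)) k = (fx x k - fx y k) * (lam x k - l)"
    unfolding fx_line lam_def using dnz by (simp add: field_simps)
  thus ?thesis using sd by (simp add: sgn_mult)
qed

lemma good_line: "inner (cc i k) (x + l *\<^sub>R (y - x)) - inner (cc i k) y = (1 - l) * (inner (cc i k) x - inner (cc i k) y)"
  by (simp add: line_inner algebra_simps)

lemma cc_zero:
  assumes "fx z i = 0" "fx z k = 0"
  shows "inner (cc i k) z = inner (cc i k) y"
proof -
  have zi: "inner (u i) z = a i" and zk: "inner (u k) z = a k" using assms by (auto simp: fx_def)
  show ?thesis unfolding cc_def by (simp add: inner_diff_left zi zk fx_def algebra_simps)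
qed

lemma D_fin: "finite (D x)" unfolding D_def by simp

lemma step:
  assumes x: "region x" and gx: "good x" and ne: "D x \<noteq> {}"
  shows "\<exists>x1. region x1 \<and> good x1 \<and> card (D x1) < card (D x) \<and> (P (sign_vec m u a x1) \<longrightarrow> P (sign_vec m u a x))"
proof -
  let ?p = "\<lambda>l. x + l *\<^sub>R (y - x)"
  define ls where "ls = Min (lam x ` D x)"
  have "ls \<in> lam x ` D x" unfolding ls_def using D_fin ne by (intro Min_in) auto
  then obtain i0 where i0: "i0 \<in> D x" "lam x i0 = ls" by auto
  have i0': "i0 < m" "i0 \<noteq> j" using i0(1) unfolding D_def by auto
  have lsle: "ls \<le> lam x i" if "i \<in> D x" for i unfolding ls_def using D_fin that by (intro Min_le) auto
  have ls01: "0 < ls" "ls < 1" using D_props[OF x i0(1)] i0(2) by auto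
  have lslt: "ls < lam x i" if i: "i \<in> D x" "i \<noteq> i0" for i
  proof (rule ccontr)
    assume "\<not> ls < lam x i"
    hence eq: "lam x i = ls" using lsle[OF i(1)] by simp
    have "sgn (fx (?p ls) i) = 0" using sgn_D[OF x i(1), of ls] eq by simp
    hence z1: "fx (?p ls) i = 0" by (simp add: sgn_zero_iff)
    have "sgn (fx (?p ls) i0) = 0" using sgn_D[OF x i0(1), of ls] i0(2) by simp
    hence z2: "fx (?p ls) i0 = 0" by (simp add: sgn_zero_iff)
    have "inner (cc i i0) (?p ls) = inner (cc i i0) y" by (rule cc_zero[OF z1 z2])
    hence "(1 - ls) * (inner (cc i i0) x - inner (cc i i0) y) = 0" using good_line[of i i0 x ls] by simp
    hence "inner (cc i i0) x = inner (cc i i0) y" using ls01 by simp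
    moreover have "i < m" "i \<noteq> j" using i(1) unfolding D_def by auto
    ultimately show False using gx i0' i(2) unfolding good_def by blast
  qed
  define l2 where "l2 = Min (insert 1 (lam x ` (D x - {i0})))"
  have l2le1: "l2 \<le> 1" unfolding l2_def using D_fin by (intro Min_le) auto
  have l2le: "l2 \<le> lam x i" if "i \<in> D x" "i \<noteq> i0" for i
    unfolding l2_def using D_fin that by (intro Min_le) auto
  have "l2 \<in> insert 1 (lam x ` (D x - {i0}))" unfolding l2_def using D_fin by (intro Min_in) auto
  hence lsl2: "ls < l2" using lslt ls01 by auto
  define \<mu> where "\<mu> = (ls + l2) / 2"
  have mu: "ls < \<mu>" "\<mu> < l2" "\<mu> < 1" "0 \<le> \<mu>" using lsl2 l2le1 ls01 unfolding \<mu>_def by auto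
  define x1 where "x1 = ?p \<mu>"
  define z where "z = ?p ls"
  have S1: "sgn (fx x1 k) = (if k = i0 then - sgn (fx x k) else sgn (fx x k))" if k: "k < m" for k
  proof (cases "k = j")
    case True thus ?thesis unfolding x1_def using sgn_j[OF mu(3)] i0' by simp
  next
    case kj: False
    show ?thesis
    proof (cases "k \<in> D x")
      case True
      show ?thesis
      proof (cases "k = i0")
        case True
        have "lam x k - \<mu> < 0" using True i0(2) mu by simp
        thus ?thesis unfolding x1_def using sgn_D[OF x \<open>k \<in> D x\<close>, of \<mu>] True by simp
      next
        case False
        have "lam x k - \<mu> > 0" using l2le[OF \<open>k \<in> D x\<close> False] mu by simp
        thus ?thesis unfolding x1_def using sgn_D[OF x \<open>k \<in> D x\<close>, of \<mu>] False by simp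
      qed
    next
      case False
      hence "k \<noteq> i0" using i0 by auto
      thus ?thesis unfolding x1_def using sgn_nonD[OF x k kj False mu(4)] mu(3) by simp
    qed
  qed
  have S2: "sgn (fx z k) = (if k = i0 then 0 else sgn (fx x k))" if k: "k < m" for k
  proof (cases "k = j")
    case True thus ?thesis unfolding z_def using sgn_j[OF ls01(2)] i0' by simp
  next
    case kj: False
    show ?thesis
    proof (cases "k \<in> D x")
      case True
      show ?thesis
      proof (cases "k = i0")
        case True
        thus ?thesis unfolding z_def using sgn_D[OF x \<open>k \<in> D x\<close>, of ls] i0(2) by simp
      next
        case False
        have "lam x k - ls > 0" using lslt[OF \<open>k \<in> D x\<close> False] by simp
        thus ?thesis unfolding z_def using sgn_D[OF x \<open>k \<in> D x\<close>, of ls] False by simp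
      qed
    next
      case False
      hence "k \<noteq> i0" using i0 by auto
      thus ?thesis unfolding z_def using sgn_nonD[OF x k kj False] ls01 by simp
    qed
  qed
  have rx1: "region x1" unfolding region_def
  proof (intro allI impI)
    fix k assume k: "k < m"
    have "sgn (fx x k) \<noteq> 0" using fx_nz[OF x k] by (simp add: sgn_zero_iff)
    thus "sign_vec m u a x1 k \<noteq> 0" using S1[OF k] k by (cases "k = i0") (simp_all add: sv_fx)
  qed
  have gx1: "good x1" unfolding good_def
  proof (intro allI impI)
    fix i k assume "i < m" "k < m" "i \<noteq> j" "k \<noteq> j" "i \<noteq> k"
    hence "inner (cc i k) x - inner (cc i k) y \<noteq> 0" using gx unfolding good_def by auto
    hence "inner (cc i k) x1 - inner (cc i k) y \<noteq> 0" unfolding x1_def good_line using mu(3) by simp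
    thus "inner (cc i k) x1 \<noteq> inner (cc i k) y" by simp
  qed
  have Dx1: "D x1 = D x - {i0}"
  proof (intro set_eqI iffI)
    fix k assume k: "k \<in> D x1"
    hence k': "k < m" "k \<noteq> j" "sgn (fx x1 k) \<noteq> sgn (fx y k)" unfolding D_def by auto
    show "k \<in> D x - {i0}"
    proof (cases "k = i0")
      case True
      hence "sgn (fx x1 k) = sgn (fx y k)" using S1[OF k'(1)] D_props(4)[OF x i0(1)] by simp
      thus ?thesis using k' by simp
    next
      case False thus ?thesis using S1[OF k'(1)] k' unfolding D_def by simp
    qed
  next
    fix k assume k: "k \<in> D x - {i0}"
    hence k': "k < m" "k \<noteq> j" "sgn (fx x k) \<noteq> sgn (fx y k)" "k \<noteq> i0" unfolding D_def by auto
    thus "k \<in> D x1" using S1[OF k'(1)] unfolding D_def by simp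
  qed
  have card: "card (D x1) < card (D x)" unfolding Dx1 using D_fin i0(1) by (rule card_Diff1_less)
  have transfer: "P (sign_vec m u a x)" if P1: "P (sign_vec m u a x1)"
    unfolding P_def
  proof (intro allI impI)
    let ?s = "sign_vec m u a x" and ?s1 = "sign_vec m u a x1" and ?g = "sign_vec m u a z"
    fix s' assume s': "s' \<in> arr_signs m u b" "\<Psi> (closure (cell m u a ?s)) = closure (cell m u b s')"
    have sS: "?s \<in> arr_signs m u a" "?s1 \<in> arr_signs m u a" "?g \<in> arr_signs m u a"
      by (auto simp: arr_signs_def)
    have gk: "?g k = (if k = i0 then 0 else ?s k)" for k
      using S2[of k] sv_ge[of m k u a z] sv_ge[of m k u a x] using i0' by (cases "k < m") (auto simp add: sv_fx)
    have s1k: "?s1 k = (if k = i0 then - ?s k else ?s k)" for k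
      using S1[of k] sv_ge[of m k u a x1] sv_ge[of m k u a x] using i0' by (cases "k < m") (auto simp add: sv_fx)
    have gs: "sle ?g ?s" unfolding sle_def using gk by simp
    have gs1: "sle ?g ?s1" unfolding sle_def using gk s1k by simp
    have gi0: "?g i0 = 0" using gk by simp
    have gz: "\<forall>k<m. k \<noteq> i0 \<longrightarrow> ?g k \<noteq> 0" using gk region_def x by simp
    obtain g' where g': "g' \<in> arr_signs m u b" "\<Psi> (closure (cell m u a ?g)) = closure (cell m u b g')"
      using image_rep[OF sS(3)] by blast
    obtain s1' where s1': "s1' \<in> arr_signs m u b" "\<Psi> (closure (cell m u a ?s1)) = closure (cell m u b s1')"
      using image_rep[OF sS(2)] by blast
    have Z: "\<forall>k<m. g' k = 0 \<longleftrightarrow> k = i0"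
      by (rule Z_lemma[OF nonzero nonparallel sS(3) i0'(1) gi0 gz g'(1) fan_eq[OF sS(3) g'(2)]])
    hence g'j: "g' j \<noteq> 0" using jm i0' by auto
    have "closure (cell m u b g') \<subseteq> closure (cell m u b s')"
      using mono_Psi[OF sS(3) sS(1) gs] g'(2) s'(2) by simp
    hence "sle g' s'" using cl_sub[OF s'(1) g'(1)] by simp
    hence e1: "s' j = g' j" using g'j unfolding sle_def by metis
    have "closure (cell m u b g') \<subseteq> closure (cell m u b s1')"
      using mono_Psi[OF sS(3) sS(2) gs1] g'(2) s1'(2) by simp
    hence "sle g' s1'" using cl_sub[OF s1'(1) g'(1)] by simp
    hence e2: "s1' j = g' j" using g'j unfolding sle_def by metis
    have "s1' j = ?s1 j" using P1 s1' unfolding P_def by blast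
    thus "s' j = ?s j" using e1 e2 s1k[of j] i0' by simp
  qed
  show ?thesis using rx1 gx1 card transfer by blast
qed

lemma walk: "region x \<Longrightarrow> good x \<Longrightarrow> P (sign_vec m u a x)"
proof (induction "card (D x)" arbitrary: x rule: less_induct)
  case less
  show ?case
  proof (cases "D x = {}")
    case True thus ?thesis using base less.prems by blast
  next
    case False
    then obtain x1 where "region x1" "good x1" "card (D x1) < card (D x)" "P (sign_vec m u a x1) \<longrightarrow> P (sign_vec m u a x)"
      using step less.prems by blast
    thus ?thesis using less.hyps by blast
  qed
qed

end



lemma avoid_hyps2:
  fixes c :: "'i \<Rightarrow> 'a::euclidean_space"
  assumes S: "open S" "S \<noteq> {}" and I: "finite I" and c: "\<forall>i\<in>I. c i \<noteq> 0"
  shows "\<exists>x\<in>S. \<forall>i\<in>I. inner (c i) x \<noteq> e i"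
proof (rule ccontr)
  assume "\<not> (\<exists>x\<in>S. \<forall>i\<in>I. inner (c i) x \<noteq> e i)"
  hence sub: "S \<subseteq> \<Union> ((\<lambda>i. {x. c i \<bullet> x = e i}) ` I)" by auto
  have "negligible (\<Union> ((\<lambda>i. {x. c i \<bullet> x = e i}) ` I))"
  proof (rule negligible_Union)
    show "finite ((\<lambda>i. {x. c i \<bullet> x = e i}) ` I)" using I by simp
    show "\<And>T. T \<in> (\<lambda>i. {x. c i \<bullet> x = e i}) ` I \<Longrightarrow> negligible T"
      using c negligible_hyperplane by blast
  qed
  hence "negligible S" using sub negligible_subset by blast
  thus False using open_not_negligible[OF S] by simp
qed

lemma generic_y:
  fixes u :: "nat \<Rightarrow> 'a::euclidean_space"
  assumes nonzero: "\<forall>i<m. u i \<noteq> 0"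
    and nonparallel: "\<forall>i<m. \<forall>j<m. i \<noteq> j \<longrightarrow> (\<nexists>c. u j = c *\<^sub>R u i)"
    and j: "j < m"
  shows "\<exists>y. inner (u j) y = a j \<and> (\<forall>i<m. i \<noteq> j \<longrightarrow> inner (u i) y \<noteq> a i)"
proof -
  have uj: "u j \<noteq> 0" using nonzero j by auto
  let ?n = "inner (u j) (u j)"
  have n0: "?n \<noteq> 0" using uj by simp
  define p where "p = (a j / ?n) *\<^sub>R u j"
  define c where "c i = u i - (inner (u i) (u j) / ?n) *\<^sub>R u j" for i
  have cnz: "\<forall>i\<in>{i. i < m \<and> i \<noteq> j}. c i \<noteq> 0"
  proof
    fix i assume i: "i \<in> {i. i < m \<and> i \<noteq> j}"
    show "c i \<noteq> 0"
    proof
      assume "c i = 0"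
      hence "u i = (inner (u i) (u j) / ?n) *\<^sub>R u j" unfolding c_def by simp
      thus False using nonparallel j i by blast
    qed
  qed
  obtain z where z: "\<forall>i\<in>{i. i < m \<and> i \<noteq> j}. inner (c i) z \<noteq> a i - inner (u i) p"
    using avoid_hyps2[of UNIV "{i. i < m \<and> i \<noteq> j}" c "\<lambda>i. a i - inner (u i) p"] cnz by auto
  define y where "y = p + z - (inner z (u j) / ?n) *\<^sub>R u j"
  have "inner (u j) y = a j" unfolding y_def p_def using n0
    by (simp add: inner_add_right inner_diff_right inner_commute)
  moreover have "inner (u i) y = inner (u i) p + inner (c i) z" for i
    unfolding y_def c_def by (simp add: inner_add_right inner_diff_right inner_diff_left inner_commute algebra_simps)
  ultimately show ?thesis using z by (intro exI[of _ y]) auto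
qed

lemma region_map:
  fixes u :: "nat \<Rightarrow> 'a::euclidean_space"
  assumes nonzero: "\<forall>i<m. u i \<noteq> 0"
    and nonparallel: "\<forall>i<m. \<forall>j<m. i \<noteq> j \<longrightarrow> (\<nexists>c. u j = c *\<^sub>R u i)"
    and bij: "bij_betw \<Psi> (arr_faces m u a) (arr_faces m u b)"
    and ord: "\<forall>G\<in>arr_faces m u a. \<forall>H\<in>arr_faces m u a. G \<subseteq> H \<longleftrightarrow> \<Psi> G \<subseteq> \<Psi> H"
    and ne: "\<forall>G\<in>arr_faces m u a. normally_equiv G (\<Psi> G)"
    and s: "s \<in> arr_signs m u a" and snz: "\<forall>l<m. s l \<noteq> 0"
    and s': "s' \<in> arr_signs m u b" and ss': "\<Psi> (closure (cell m u a s)) = closure (cell m u b s')"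
  shows "s' = s"
proof
  fix j show "s' j = s j"
  proof (cases "j < m")
    case False thus ?thesis using signs_ge[OF s, of j] signs_ge[OF s', of j] by simp
  next
    case jm: True
    obtain y where y: "inner (u j) y = a j" "\<forall>i<m. i \<noteq> j \<longrightarrow> inner (u i) y \<noteq> a i"
      using generic_y[OF nonzero nonparallel jm] by blast
    interpret W: wctx m u a b \<Psi> j y
      by unfold_locales (use nonzero nonparallel bij ord ne jm y in auto)
    let ?I = "{(i, k). i < m \<and> k < m \<and> i \<noteq> j \<and> k \<noteq> j \<and> i \<noteq> k}"
    have cnz: "\<forall>ik\<in>?I. W.cc (fst ik) (snd ik) \<noteq> 0"
    proof
      fix ik assume ik: "ik \<in> ?I"
      obtain i k where ik': "ik = (i, k)" by fastforce
      have i: "i < m" "k < m" "i \<noteq> j" "k \<noteq> j" "i \<noteq> k" using ik ik' by auto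
      have fi: "W.fx y i \<noteq> 0" "W.fx y k \<noteq> 0" using W.fy_nz i by auto
      show "W.cc (fst ik) (snd ik) \<noteq> 0"
      proof
        assume "W.cc (fst ik) (snd ik) = 0"
        hence "W.fx y k *\<^sub>R u i = W.fx y i *\<^sub>R u k" unfolding W.cc_def ik' by simp
        hence "u k = (W.fx y k / W.fx y i) *\<^sub>R u i" using fi
          by (metis (no_types, lifting) divide_inverse_commute eq_vector_fraction_iff mult.commute scaleR_scaleR)
        thus False using nonparallel i by blast
      qed
    qed
    have op: "open (cell m u a s)" by (rule open_cell[OF s snz])
    have nem: "cell m u a s \<noteq> {}" using s by (auto simp: arr_signs_def cell_def)
    have fin: "finite ?I" by (rule finite_subset[of _ "{..<m} \<times> {..<m}"]) auto
    obtain x where x: "x \<in> cell m u a s" "\<forall>ik\<in>?I. inner (W.cc (fst ik) (snd ik)) x \<noteq> inner (W.cc (fst ik) (snd ik)) y"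
      using avoid_hyps2[OF op nem fin cnz, of "\<lambda>ik. inner (W.cc (fst ik) (snd ik)) y"] by blast
    have sx: "sign_vec m u a x = s" using x(1) by (simp add: cell_def)
    have "W.region x" unfolding W.region_def sx using snz .
    moreover have "W.good x" unfolding W.good_def using x(2) by auto
    ultimately have "W.P s" using W.walk sx by metis
    thus ?thesis using s' ss' unfolding W.P_def by blast
  qed
qed



lemma ane_sym:
  assumes "arr_normally_equiv F F'"
  shows "arr_normally_equiv F' F"
proof -
  obtain \<Psi> where bij: "bij_betw \<Psi> F F'" and ord: "\<forall>G\<in>F. \<forall>H\<in>F. G \<subseteq> H \<longleftrightarrow> \<Psi> G \<subseteq> \<Psi> H"
    and ne: "\<forall>G\<in>F. normally_equiv G (\<Psi> G)"
    using assms unfolding arr_normally_equiv_def by blast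
  define \<Phi> where "\<Phi> = inv_into F \<Psi>"
  have bij': "bij_betw \<Phi> F' F" unfolding \<Phi>_def by (rule bij_betw_inv_into[OF bij])
  have img: "F' = \<Psi> ` F" using bij by (simp add: bij_betw_def)
  have inv: "\<Psi> (\<Phi> G') = G'" if "G' \<in> F'" for G'
    unfolding \<Phi>_def using that img by (simp add: f_inv_into_f)
  have inF: "\<Phi> G' \<in> F" if "G' \<in> F'" for G' using bij' that bij_betwE by blast
  show ?thesis unfolding arr_normally_equiv_def
  proof (intro exI conjI ballI)
    show "bij_betw \<Phi> F' F" by (rule bij')
  next
    fix G' H' assume G': "G' \<in> F'" and H': "H' \<in> F'"
    show "G' \<subseteq> H' \<longleftrightarrow> \<Phi> G' \<subseteq> \<Phi> H'"
      using ord inF[OF G'] inF[OF H'] inv[OF G'] inv[OF H'] by metis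
  next
    fix G' assume G': "G' \<in> F'"
    have "normally_equiv (\<Phi> G') (\<Psi> (\<Phi> G'))" using ne inF[OF G'] by blast
    thus "normally_equiv G' (\<Phi> G')" using inv[OF G'] unfolding normally_equiv_def by simp
  qed
qed

lemma signs_sub:
  fixes u :: "nat \<Rightarrow> 'a::euclidean_space"
  assumes nonzero: "\<forall>i<m. u i \<noteq> 0"
    and nonparallel: "\<forall>i<m. \<forall>j<m. i \<noteq> j \<longrightarrow> (\<nexists>c. u j = c *\<^sub>R u i)"
    and e: "arr_normally_equiv (arr_faces m u a) (arr_faces m u b)"
  shows "arr_signs m u a \<subseteq> arr_signs m u b"
proof
  obtain \<Psi> where bij: "bij_betw \<Psi> (arr_faces m u a) (arr_faces m u b)"
    and ord: "\<forall>G\<in>arr_faces m u a. \<forall>H\<in>arr_faces m u a. G \<subseteq> H \<longleftrightarrow> \<Psi> G \<subseteq> \<Psi> H"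
    and ne: "\<forall>G\<in>arr_faces m u a. normally_equiv G (\<Psi> G)"
    using e unfolding arr_normally_equiv_def by blast
  obtain \<Phi> where bij2: "bij_betw \<Phi> (arr_faces m u b) (arr_faces m u a)"
    and ord2: "\<forall>G\<in>arr_faces m u b. \<forall>H\<in>arr_faces m u b. G \<subseteq> H \<longleftrightarrow> \<Phi> G \<subseteq> \<Phi> H"
    and ne2: "\<forall>G\<in>arr_faces m u b. normally_equiv G (\<Phi> G)"
    using ane_sym[OF e] unfolding arr_normally_equiv_def by blast
  have rep: "\<exists>s'\<in>arr_signs m u b. \<Psi> (closure (cell m u a s)) = closure (cell m u b s')" if "s \<in> arr_signs m u a" for s
  proof -
    have "closure (cell m u a s) \<in> arr_faces m u a" unfolding faces_image using that by blast
    hence "\<Psi> (closure (cell m u a s)) \<in> arr_faces m u b" using bij bij_betwE by blast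
    thus ?thesis unfolding faces_image by blast
  qed
  have rep2: "\<exists>s'\<in>arr_signs m u a. \<Phi> (closure (cell m u b s)) = closure (cell m u a s')" if "s \<in> arr_signs m u b" for s
  proof -
    have "closure (cell m u b s) \<in> arr_faces m u b" unfolding faces_image using that by blast
    hence "\<Phi> (closure (cell m u b s)) \<in> arr_faces m u a" using bij2 bij_betwE by blast
    thus ?thesis unfolding faces_image by blast
  qed
  have RA: "s \<in> arr_signs m u b \<and> \<Psi> (closure (cell m u a s)) = closure (cell m u b s)"
    if s: "s \<in> arr_signs m u a" "\<forall>l<m. s l \<noteq> 0" for s
  proof -
    obtain s' where s': "s' \<in> arr_signs m u b" "\<Psi> (closure (cell m u a s)) = closure (cell m u b s')"
      using rep[OF s(1)] by blast
    have "s' = s" by (rule region_map[OF nonzero nonparallel bij ord ne s s'])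
    thus ?thesis using s' by simp
  qed
  have RB: "r \<in> arr_signs m u a"
    if r: "r \<in> arr_signs m u b" "\<forall>l<m. r l \<noteq> 0" for r
  proof -
    obtain r' where r': "r' \<in> arr_signs m u a" "\<Phi> (closure (cell m u b r)) = closure (cell m u a r')"
      using rep2[OF r(1)] by blast
    have "r' = r" by (rule region_map[OF nonzero nonparallel bij2 ord2 ne2 r r'])
    thus ?thesis using r' by simp
  qed
  fix t assume t: "t \<in> arr_signs m u a"
  obtain t' where t': "t' \<in> arr_signs m u b" "\<Psi> (closure (cell m u a t)) = closure (cell m u b t')"
    using rep[OF t] by blast
  have key: "sle t s \<longleftrightarrow> sle t' s" if s: "s \<in> arr_signs m u a" "\<forall>l<m. s l \<noteq> 0" for s
  proof -
    have sb: "s \<in> arr_signs m u b" "\<Psi> (closure (cell m u a s)) = closure (cell m u b s)" using RA[OF s] by auto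
    have fa: "closure (cell m u a t) \<in> arr_faces m u a" "closure (cell m u a s) \<in> arr_faces m u a"
      unfolding faces_image using t s by blast+
    have "sle t s \<longleftrightarrow> closure (cell m u a t) \<subseteq> closure (cell m u a s)" using cl_sub[OF s(1) t] by simp
    also have "\<dots> \<longleftrightarrow> \<Psi> (closure (cell m u a t)) \<subseteq> \<Psi> (closure (cell m u a s))" using ord fa by blast
    also have "\<dots> \<longleftrightarrow> closure (cell m u b t') \<subseteq> closure (cell m u b s)" using t'(2) sb(2) by simp
    also have "\<dots> \<longleftrightarrow> sle t' s" using cl_sub[OF sb(1) t'(1)] by simp
    finally show ?thesis .
  qed
  obtain x where x: "sign_vec m u a x = t" using t by (auto simp: arr_signs_def)
  obtain x' where x': "sign_vec m u b x' = t'" using t'(1) by (auto simp: arr_signs_def)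
  have regA: "\<exists>s. s \<in> arr_signs m u a \<and> (\<forall>l<m. s l \<noteq> 0) \<and> sle t s \<and> (t k = 0 \<longrightarrow> s k = \<sigma>)"
    if km: "k < m" and sg: "\<sigma> = 1 \<or> \<sigma> = -1" for k \<sigma>
  proof -
    obtain z where "sle (sign_vec m u a x) (sign_vec m u a z)" "\<forall>l<m. sign_vec m u a z l \<noteq> 0"
      "sign_vec m u a x k = 0 \<longrightarrow> sign_vec m u a z k = \<sigma>"
      using region_above[OF nonzero km sg] by blast
    thus ?thesis using x by (intro exI[of _ "sign_vec m u a z"]) (auto simp: arr_signs_def)
  qed
  have regB: "\<exists>r. r \<in> arr_signs m u b \<and> (\<forall>l<m. r l \<noteq> 0) \<and> sle t' r \<and> (t' k = 0 \<longrightarrow> r k = \<sigma>)"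
    if km: "k < m" and sg: "\<sigma> = 1 \<or> \<sigma> = -1" for k \<sigma>
  proof -
    obtain z where "sle (sign_vec m u b x') (sign_vec m u b z)" "\<forall>l<m. sign_vec m u b z l \<noteq> 0"
      "sign_vec m u b x' k = 0 \<longrightarrow> sign_vec m u b z k = \<sigma>"
      using region_above[OF nonzero km sg] by blast
    thus ?thesis using x' by (intro exI[of _ "sign_vec m u b z"]) (auto simp: arr_signs_def)
  qed
  have "t' k = t k" for k
  proof (cases "k < m")
    case False thus ?thesis using signs_ge[OF t, of k] signs_ge[OF t'(1), of k] by simp
  next
    case k: True
    show ?thesis
    proof (cases "t k = 0")
      case False
      have pm: "t k = 1 \<or> t k = -1" using signs_vals[OF t, of k] False by auto
      obtain s where s: "s \<in> arr_signs m u a" "\<forall>l<m. s l \<noteq> 0" "sle t s"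
        using regA[OF k pm] by blast
      have "sle t' s" using key[OF s(1,2)] s(3) by simp
      hence A: "t' k = 0 \<or> t' k = t k" using s(3) False unfolding sle_def by metis
      have "t' k \<noteq> 0"
      proof
        assume t'0: "t' k = 0"
        have pm': "- t k = 1 \<or> - t k = -1" using pm by auto
        obtain r where r: "r \<in> arr_signs m u b" "\<forall>l<m. r l \<noteq> 0" "sle t' r" "r k = - t k"
          using regB[OF k pm'] t'0 by blast
        have ra: "r \<in> arr_signs m u a" using RB[OF r(1,2)] .
        have "sle t r" using key[OF ra r(2)] r(3) by simp
        hence "t k = 0 \<or> t k = r k" unfolding sle_def by metis
        thus False using False r(4) by simp
      qed
      thus ?thesis using A by simp
    next
      case True
      show ?thesis
      proof (rule ccontr)
        assume ne': "t' k \<noteq> t k"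
        hence nz: "t' k \<noteq> 0" using True by simp
        have pm: "- t' k = 1 \<or> - t' k = -1" using signs_vals[OF t'(1), of k] nz by auto
        obtain s where s: "s \<in> arr_signs m u a" "\<forall>l<m. s l \<noteq> 0" "sle t s" "s k = - t' k"
          using regA[OF k pm] True by blast
        have "sle t' s" using key[OF s(1,2)] s(3) by simp
        hence "t' k = 0 \<or> t' k = s k" unfolding sle_def by metis
        thus False using nz s(4) by simp
      qed
    qed
  qed
  hence "t' = t" by auto
  thus "t \<in> arr_signs m u b" using t'(1) by simp
qed

theorem mainTheorem18:
  fixes u :: "nat \<Rightarrow> 'a::euclidean_space" and m :: nat and a b :: "nat \<Rightarrow> real"
  assumes nonzero: "\<forall>i<m. u i \<noteq> 0"
    and nonparallel: "\<forall>i<m. \<forall>j<m. i \<noteq> j \<longrightarrow> (\<nexists>c. u j = c *\<^sub>R u i)"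
  shows "arr_normally_equiv (arr_faces m u a) (arr_faces m u b)
         \<longleftrightarrow> arr_signs m u a = arr_signs m u b"
proof
  assume e: "arr_normally_equiv (arr_faces m u a) (arr_faces m u b)"
  show "arr_signs m u a = arr_signs m u b"
    using signs_sub[OF nonzero nonparallel e] signs_sub[OF nonzero nonparallel ane_sym[OF e]] by blast
next
  assume "arr_signs m u a = arr_signs m u b"
  thus "arr_normally_equiv (arr_faces m u a) (arr_faces m u b)" by (rule if_direction)
qed


end
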